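(* Let $d_{in}, d_{out}, d_{\rm key}, k, m$ be positive integers, let $\mathbf W_q, \mathbf W_{\rm key} \in \mathbb R^{d_{in}\times d_{\rm key}}$ and $\mathbf W_v \in \mathbb R^{d_{in}\times d_{out}}$, and let $\sigma_q, \sigma_{\rm key}, \sigma_v$ denote the largest singular values of $\mathbf W_q, \mathbf W_{\rm key}, \mathbf W_v$ respectively. Let $\mathbf X_0 \in \mathbb R^{m\times d_{in}}$ (imposed state) with rows $(\mathbf X_0)^1,\dots,(\mathbf X_0)^m$, let $M_x := \max_j \|(\mathbf X_0)^j\|$, let $M_u>0$, and let $\mathbf Y^* \in \mathbb R^{m\times d_{out}}$ (desired output) with rows $\mathbf Y^{*1},\dots,\mathbf Y^{*m}$. Define $$\alpha := \frac{\sigma_q\sigma_{\rm key}M_uM_x}{\sqrt{d_{\rm key}}},\qquad g_i := \sum_{j=1}^m \exp\!\Big(\frac{(\mathbf X_0)^i\mathbf W_q\mathbf W_{\rm key}^\top (\mathbf X_0)^{j\top}}{\sqrt{d_{\rm key}}}\Big),\qquad \gamma_i := \frac{e^{\alpha}}{g_i}\,\sigma_v M_u .$$ Let $\mathbf Y_x^{\max} := \Xi(\mathbf X_0;\boldsymbol\theta)\in\mathbb R^{m\times d_{out}}$, and for each $i$ let $\mathbf Y^{\max,i}_{x,\perp}$ denote the orthogonal projection of the $i$-th row of $\mathbf Y_x^{\max}$ onto the orthogonal complement (in $\mathbb R^{d_{out}}$) of $\operatorname{span}(\mathbf Y^{*i})$. Suppose that for some $i\in\{1,\dots,m\}$, $$\|\mathbf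 Y^{\max,i}_{x,\perp}\| > k\,\gamma_i .$$ Then for every control input $\mathbf U\in\mathbb R^{k\times d_{in}}$ whose rows satisfy $\|\mathbf U^j\|\le M_u$ for all $j=1,\dots,k$, the output $\mathbf Y$ (the last $m$ rows of $\Xi([\mathbf U;\mathbf X_0];\boldsymbol\theta)$) satisfies $\mathbf Y\neq \mathbf Y^*$; i.e., $\mathbf Y^*$ is unreachable with $k$ control tokens of norm at most $M_u$.
   Context: Self-attention with parameters $\boldsymbol\theta=(\mathbf W_q,\mathbf W_{\rm key},\mathbf W_v)$ is the map $\Xi(\cdot;\boldsymbol\theta):\mathbb R^{N\times d_{in}}\to\mathbb R^{N\times d_{out}}$ (for any $N$) given by $\Xi(\mathbf X;\boldsymbol\theta)=\mathbf D^{-1}\exp\!\big(\mathbf Q\mathbf K^\top/\sqrt{d_{\rm key}}\big)\mathbf V$, where $\mathbf Q=\mathbf X\mathbf W_q$, $\mathbf K=\mathbf X\mathbf W_{\rm key}$, $\mathbf V=\mathbf X\mathbf W_v$, $\exp$ is applied entrywise, and $\mathbf D=\operatorname{diag}\big(\exp(\mathbf Q\mathbf K^\top/\sqrt{d_{\rm key}})\mathbf 1_{N\times1}\big)$ (i.e., row-wise softmax attention, no masking). For $\mathbf U\in\mathbb R^{k\times d_{in}}$ and $\mathbf X_0\in\mathbb R^{m\times d_{in}}$, $[\mathbf U;\mathbf X_0]\in\mathbb R^{(k+m)\times d_{in}}$ denotes vertical concatenation (rows of $\mathbf U$ first), and the output $\Xi([\mathbf U;\mathbf X_0];\boldsymbol\theta)$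 is partitioned as $[\mathbf U';\mathbf Y]$ with $\mathbf U'\in\mathbb R^{k\times d_{out}}$, $\mathbf Y\in\mathbb R^{m\times d_{out}}$. Rows of matrices are indexed by superscripts; norms of rows are Euclidean. *)

theory Defs
  imports "HOL-Analysis.Analysis"
begin

text \<open>Matrices of varying size are represented as functions nat \<Rightarrow> nat \<Rightarrow> real;
  entry (r,c) is A r c, indices start at 0, dimensions are carried explicitly
  and only entries with in-range indices are ever used.\<close>

type_synonym rmat = "nat \<Rightarrow> nat \<Rightarrow> real"

definition matmul :: "nat \<Rightarrow> rmat \<Rightarrow> rmat \<Rightarrow> rmat" where
  "matmul n A B = (\<lambda>i j. \<Sum>l<n. A i l * B l j)"

definition mtrans :: "rmat \<Rightarrow> rmat" where
  "mtrans A = (\<lambda>i j. A j i)"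

definition rownorm :: "nat \<Rightarrow> rmat \<Rightarrow> nat \<Rightarrow> real" where
  "rownorm n A i = sqrt (\<Sum>j<n. (A i j)\<^sup>2)"

definition sigma_max :: "nat \<Rightarrow> nat \<Rightarrow> rmat \<Rightarrow> real" where
  "sigma_max r c W = sqrt (Max {ev. \<exists>v::nat \<Rightarrow> real. (\<exists>j<c. v j \<noteq> 0) \<and>
      (\<forall>j<c. (\<Sum>l<c. matmul r (mtrans W) W j l * v l) = ev * v j)})"

text \<open>Self-attention \<Xi>(X; Wq, Wkey, Wv) for X an (N x din) matrix,
  Wq, Wkey : din x dkey, Wv : din x dout. Row-wise softmax, no masking.\<close>
definition attn_scores :: "nat \<Rightarrow> nat \<Rightarrow> rmat \<Rightarrow> rmat \<Rightarrow> rmat \<Rightarrow> rmat" where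
  "attn_scores din dkey Wq Wkey X =
     (\<lambda>i l. matmul dkey (matmul din X Wq) (mtrans (matmul din X Wkey)) i l / sqrt (real dkey))"

definition self_attention ::
  "nat \<Rightarrow> nat \<Rightarrow> nat \<Rightarrow> rmat \<Rightarrow> rmat \<Rightarrow> rmat \<Rightarrow> rmat \<Rightarrow> rmat" where
  "self_attention N din dkey Wq Wkey Wv X =
     (\<lambda>i j. (\<Sum>l<N. exp (attn_scores din dkey Wq Wkey X i l) * matmul din X Wv l j)
           / (\<Sum>l<N. exp (attn_scores din dkey Wq Wkey X i l)))"

definition vconcat :: "nat \<Rightarrow> rmat \<Rightarrow> rmat \<Rightarrow> rmat" where
  "vconcat k U X0 = (\<lambda>r c. if r < k then U r c else X0 (r - k) c)"

definition proj_perp_row :: "nat \<Rightarrow> rmat \<Rightarrow> rmat \<Rightarrow> nat \<Rightarrow> nat \<Rightarrow> real" where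
  "proj_perp_row n Y Ys i =
     (let yy = (\<Sum>j<n. (Ys i j)\<^sup>2); vy = (\<Sum>j<n. Y i j * Ys i j) in
      (\<lambda>c. if yy = 0 then Y i c else Y i c - (vy / yy) * Ys i c))"

definition vnorm :: "nat \<Rightarrow> (nat \<Rightarrow> real) \<Rightarrow> real" where
  "vnorm n v = sqrt (\<Sum>j<n. (v j)\<^sup>2)"

end

theory Submission
  imports Defs "Jordan_Normal_Form.Char_Poly"
begin

lemma eig_finite:
  fixes G :: rmat and c :: nat
  shows "finite {ev. \<exists>v::nat\<Rightarrow>real. (\<exists>j<c. v j \<noteq> 0) \<and>
      (\<forall>j<c. (\<Sum>l<c. G j l * v l) = ev * v j)}"
proof -
  define A where "A = Matrix.mat c c (\<lambda>(j,l). G j l)"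
  have A: "A \<in> carrier_mat c c" unfolding A_def by simp
  have cp: "char_poly A \<noteq> 0" using degree_monic_char_poly[OF A] by auto
  have "{ev. \<exists>v::nat\<Rightarrow>real. (\<exists>j<c. v j \<noteq> 0) \<and>
      (\<forall>j<c. (\<Sum>l<c. G j l * v l) = ev * v j)} \<subseteq> {k. poly (char_poly A) k = 0}"
  proof
    fix ev assume "ev \<in> {ev. \<exists>v::nat\<Rightarrow>real. (\<exists>j<c. v j \<noteq> 0) \<and>
      (\<forall>j<c. (\<Sum>l<c. G j l * v l) = ev * v j)}"
    then obtain v j0 where j0: "j0 < c" "v j0 \<noteq> 0" and ev: "\<forall>j<c. (\<Sum>l<c. G j l * v l) = ev * v j" by auto
    define w where "w = Matrix.vec c v"
    have "eigenvector A w ev"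
      unfolding eigenvector_def
    proof (intro conjI)
      show "w \<in> carrier_vec (dim_row A)" using A w_def by simp
      show "w \<noteq> 0\<^sub>v (dim_row A)"
      proof
        assume "w = 0\<^sub>v (dim_row A)"
        hence "w $ j0 = 0" using A j0 by simp
        thus False using j0 w_def by simp
      qed
      show "A *\<^sub>v w = ev \<cdot>\<^sub>v w"
      proof (rule eq_vecI)
        fix j assume "j < dim_vec (ev \<cdot>\<^sub>v w)"
        hence j: "j < c" using w_def by simp
        have "(A *\<^sub>v w) $ j = (\<Sum>l\<in>{0..<c}. G j l * v l)"
          using j A unfolding A_def w_def by (simp add: row_def scalar_prod_def)
        also have "\<dots> = ev * v j" using ev j by (simp add: atLeast0LessThan)
        finally show "(A *\<^sub>v w) $ j = (ev \<cdot>\<^sub>v w) $ j" using j w_def by simp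
      qed (use A w_def in auto)
    qed
    hence "eigenvalue A ev" unfolding eigenvalue_def by blast
    thus "ev \<in> {k. poly (char_poly A) k = 0}" using eigenvalue_root_char_poly[OF A] by simp
  qed
  moreover have "finite {k. poly (char_poly A) k = 0}" using poly_roots_finite[OF cp] .
  ultimately show ?thesis by (rule finite_subset)
qed


lemma cont_coord [continuous_intros]:
  "continuous_on S (\<lambda>x::nat\<Rightarrow>real. x i)"
  by (rule continuous_on_subset[OF continuous_on_product_coordinates]) simp

definition Mv :: "nat \<Rightarrow> rmat \<Rightarrow> (nat\<Rightarrow>real) \<Rightarrow> (nat\<Rightarrow>real)" where
  "Mv c W v = (\<lambda>t. \<Sum>j<c. W t j * v j)"

definition QQ :: "nat \<Rightarrow> nat \<Rightarrow> rmat \<Rightarrow> (nat\<Rightarrow>real) \<Rightarrow> real" where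
  "QQ r c W v = (\<Sum>t<r. (Mv c W v t)\<^sup>2)"

definition Kset :: "nat \<Rightarrow> (nat\<Rightarrow>real) set" where
  "Kset c = {v. (\<forall>j. v j \<in> (if j < c then {-1..1} else {0})) \<and> (\<Sum>j<c. (v j)\<^sup>2) = 1}"

lemma compact_K: "compact (Kset c)"
proof -
  define S where "S = (\<lambda>j::nat. (if j < c then {-1..1::real} else {0}))"
  have "compactin (product_topology (\<lambda>_. euclidean) UNIV) (PiE UNIV S)"
    by (subst compactin_PiE) (auto simp: S_def)
  hence c1: "compact (PiE UNIV S)" by (simp add: euclidean_product_topology)
  have cf: "continuous_on UNIV (\<lambda>v::nat\<Rightarrow>real. \<Sum>j<c. (v j)\<^sup>2)"
    by (intro continuous_intros)
  have c2: "closed {v::nat\<Rightarrow>real. (\<Sum>j<c. (v j)\<^sup>2) = 1}"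
    using closed_Collect_eq[OF cf continuous_on_const] .
  have "Kset c = PiE UNIV S \<inter> {v. (\<Sum>j<c. (v j)\<^sup>2) = 1}"
    unfolding Kset_def S_def by (auto simp: PiE_iff) (metis atLeastAtMost_iff singletonD)+
  thus ?thesis using compact_Int_closed[OF c1 c2] by simp
qed

lemma e0_K: "c > 0 \<Longrightarrow> (\<lambda>l. if l = 0 then 1 else 0) \<in> Kset c"
proof -
  assume c: "c > 0"
  have "(\<Sum>j<c. ((if j = 0 then 1 else 0::real))\<^sup>2) = (\<Sum>j<c. (if j = 0 then 1 else 0::real))"
    by (rule sum.cong) auto
  also have "\<dots> = 1" using c by (simp add: sum.delta)
  finally show ?thesis using c unfolding Kset_def by auto
qed

lemma max_exists:
  assumes "c > 0"
  shows "\<exists>v\<in>Kset c. \<forall>u\<in>Kset c. QQ r c W u \<le> QQ r c W v"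
proof -
  have ne: "Kset c \<noteq> {}" using e0_K[OF assms] by blast
  have "continuous_on (Kset c) (QQ r c W)" unfolding QQ_def Mv_def by (intro continuous_intros)
  from continuous_attains_sup[OF compact_K ne this] show ?thesis by blast
qed



lemma quad_zero:
  fixes B p :: real
  assumes "\<forall>x. 0 \<le> 2 * x * B + x\<^sup>2 * p" "p \<ge> 0"
  shows "B = 0"
proof (rule ccontr)
  assume B: "B \<noteq> 0"
  define x where "x = -B/(p+1)"
  have p1: "p + 1 > 0" using assms by simp
  have h: "x * (p+1) = -B" unfolding x_def using p1 by simp
  have "0 \<le> 2 * x * B + x\<^sup>2 * p" using assms by simp
  hence "0 \<le> (2 * x * B + x\<^sup>2 * p) * (p+1)\<^sup>2" using p1 by simp
  also have "\<dots> = 2 * B * (x * (p+1)) * (p+1) + p * (x * (p+1))\<^sup>2"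
    by (simp add: power2_eq_square algebra_simps)
  also have "\<dots> = -B\<^sup>2 * (p + 2)" unfolding h
    by (simp add: power2_eq_square algebra_simps)
  finally have "0 \<le> -B\<^sup>2 * (p+2)" .
  moreover have "B\<^sup>2 * (p+2) > 0" using B assms by simp
  ultimately show False by simp
qed

lemma Mv_add_e:
  assumes "j < c"
  shows "Mv c W (\<lambda>l. v l + (if l = j then s else 0)) t = Mv c W v t + s * W t j"
proof -
  have "Mv c W (\<lambda>l. v l + (if l = j then s else 0)) t
      = (\<Sum>l<c. W t l * v l) + (\<Sum>l<c. if l = j then W t l * s else 0)"
    unfolding Mv_def sum.distrib[symmetric] by (rule sum.cong) (auto simp: algebra_simps)
  also have "(\<Sum>l<c. if l = j then W t l * s else 0) = W t j * s"
    using assms by (simp add: sum.delta)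
  finally show ?thesis unfolding Mv_def by simp
qed

lemma sq_add_e:
  fixes v :: "nat \<Rightarrow> real"
  assumes "j < c"
  shows "(\<Sum>l<c. (v l + (if l = j then s else 0))\<^sup>2) = (\<Sum>l<c. (v l)\<^sup>2) + 2 * s * v j + s\<^sup>2"
proof -
  have "(\<Sum>l<c. (v l + (if l = j then s else 0))\<^sup>2)
     = (\<Sum>l<c. (v l)\<^sup>2 + (if l = j then 2 * s * v l + s\<^sup>2 else 0))"
    by (rule sum.cong) (auto simp: power2_eq_square algebra_simps)
  also have "\<dots> = (\<Sum>l<c. (v l)\<^sup>2) + 2 * s * v j + s\<^sup>2"
    using assms by (simp add: sum.distrib sum.delta)
  finally show ?thesis .
qed

lemma QQ_add_e:
  assumes "j < c"
  shows "QQ r c W (\<lambda>l. v l + (if l = j then s else 0))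
     = QQ r c W v + 2 * s * (\<Sum>t<r. Mv c W v t * W t j) + s\<^sup>2 * (\<Sum>t<r. (W t j)\<^sup>2)"
  unfolding QQ_def Mv_add_e[OF assms]
  by (simp add: power2_eq_square algebra_simps sum.distrib sum_distrib_left)

lemma QQ_zero:
  assumes "\<forall>j<c. u j = 0"
  shows "QQ r c W u = 0"
  unfolding QQ_def Mv_def using assms by simp

lemma QQ_bound:
  assumes v: "v \<in> Kset c" and mx: "\<forall>u\<in>Kset c. QQ r c W u \<le> QQ r c W v"
  shows "QQ r c W u \<le> QQ r c W v * (\<Sum>j<c. (u j)\<^sup>2)"
proof (cases "(\<Sum>j<c. (u j)\<^sup>2) = 0")
  case True
  hence "\<forall>j<c. u j = 0" by (simp add: sum_nonneg_eq_0_iff)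
  thus ?thesis using True QQ_zero by simp
next
  case False
  define s2 where "s2 = (\<Sum>j<c. (u j)\<^sup>2)"
  have "s2 \<ge> 0" unfolding s2_def by (simp add: sum_nonneg)
  hence s2pos: "s2 > 0" using False unfolding s2_def by linarith
  define s where "s = sqrt s2"
  have spos: "s > 0" using s2pos s_def by simp
  have ss: "s * s = s2" using s2pos s_def by simp
  define u' where "u' = (\<lambda>j. if j < c then u j / s else 0)"
  have "u' \<in> Kset c" unfolding Kset_def
  proof (intro CollectI conjI allI)
    fix j
    show "u' j \<in> (if j < c then {-1..1} else {0})"
    proof (cases "j < c")
      case True
      have "(u j)\<^sup>2 \<le> s2" unfolding s2_def using True
        by (intro member_le_sum) auto
      hence "sqrt ((u j)\<^sup>2) \<le> sqrt s2" by (rule real_sqrt_le_mono)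
      hence "\<bar>u j\<bar> \<le> s" unfolding s_def by simp
      hence a1: "-s \<le> u j" "u j \<le> s" by linarith+
      have "-1 \<le> u j / s" using a1(1) spos by (simp add: le_divide_eq)
      moreover have "u j / s \<le> 1" using a1(2) spos by (simp add: divide_le_eq)
      ultimately show ?thesis using True by (simp add: u'_def)
    qed (simp add: u'_def)
  next
    have "(\<Sum>j<c. (u' j)\<^sup>2) = (\<Sum>j<c. (u j)\<^sup>2 / s2)"
      by (rule sum.cong) (auto simp: u'_def power_divide ss[symmetric] power2_eq_square)
    also have "\<dots> = 1" using s2pos by (simp add: sum_divide_distrib[symmetric] s2_def)
    finally show "(\<Sum>j<c. (u' j)\<^sup>2) = 1" .
  qed
  hence le: "QQ r c W u' \<le> QQ r c W v" using mx by blast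
  have "\<And>t. Mv c W u' t = Mv c W u t / s"
    unfolding Mv_def u'_def by (simp add: sum_divide_distrib)
  hence "QQ r c W u' = QQ r c W u / s2"
    unfolding QQ_def by (simp add: power_divide ss[symmetric] power2_eq_square sum_divide_distrib)
  with le s2pos show ?thesis unfolding s2_def[symmetric] by (simp add: divide_le_eq)
qed

lemma eigen:
  assumes v: "v \<in> Kset c" and mx: "\<forall>u\<in>Kset c. QQ r c W u \<le> QQ r c W v" and j: "j < c"
  shows "(\<Sum>l<c. matmul r (mtrans W) W j l * v l) = QQ r c W v * v j"
proof -
  define mu where "mu = QQ r c W v"
  define a where "a = (\<Sum>t<r. Mv c W v t * W t j)"
  define b where "b = (\<Sum>t<r. (W t j)\<^sup>2)"
  have v1: "(\<Sum>l<c. (v l)\<^sup>2) = 1" using v unfolding Kset_def by simp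
  have "\<forall>s. 0 \<le> 2 * s * (mu * v j - a) + s\<^sup>2 * (mu - b)"
  proof
    fix s
    have "QQ r c W (\<lambda>l. v l + (if l = j then s else 0)) \<le> mu * (\<Sum>l<c. (v l + (if l = j then s else 0))\<^sup>2)"
      using QQ_bound[OF v mx] mu_def by blast
    thus "0 \<le> 2 * s * (mu * v j - a) + s\<^sup>2 * (mu - b)"
      unfolding QQ_add_e[OF j] sq_add_e[OF j] v1 a_def[symmetric] b_def[symmetric] mu_def[symmetric]
      by (simp add: algebra_simps)
  qed
  moreover have "mu - b \<ge> 0"
  proof -
    have "QQ r c W (\<lambda>l. 0 + (if l = j then 1 else 0)) \<le> mu * (\<Sum>l<c. (0 + (if l = j then 1 else 0))\<^sup>2)"
      using QQ_bound[OF v mx] mu_def by blast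
    also have "(\<Sum>l<c. (0 + (if l = j then 1 else 0::real))\<^sup>2) = 1"
      using sq_add_e[OF j, of "\<lambda>_. 0" 1] by simp
    finally show ?thesis
      using QQ_add_e[OF j, of r W "\<lambda>_. 0" 1] QQ_zero[of c "\<lambda>_. 0" r W] unfolding b_def Mv_def by simp
  qed
  ultimately have "mu * v j - a = 0" by (rule quad_zero)
  moreover have "a = (\<Sum>l<c. matmul r (mtrans W) W j l * v l)"
  proof -
    have "a = (\<Sum>t<r. \<Sum>l<c. W t j * W t l * v l)"
      unfolding a_def Mv_def by (simp add: sum_distrib_right sum_distrib_left mult_ac)
    also have "\<dots> = (\<Sum>l<c. \<Sum>t<r. W t j * W t l * v l)"
      by (rule sum.swap)
    also have "\<dots> = (\<Sum>l<c. matmul r (mtrans W) W j l * v l)"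
      unfolding matmul_def mtrans_def by (simp add: sum_distrib_right)
    finally show ?thesis .
  qed
  ultimately show ?thesis unfolding mu_def by simp
qed



lemma sigma_bound:
  assumes c: "c > 0"
  shows "(\<Sum>j<c. (\<Sum>l<r. x l * W l j)\<^sup>2) \<le> (sigma_max r c W)\<^sup>2 * (\<Sum>l<r. (x l)\<^sup>2)"
proof -
  obtain v where v: "v \<in> Kset c" and mx: "\<forall>u\<in>Kset c. QQ r c W u \<le> QQ r c W v"
    using max_exists[OF c] by blast
  define mu where "mu = QQ r c W v"
  define E where "E = {ev. \<exists>v::nat\<Rightarrow>real. (\<exists>j<c. v j \<noteq> 0) \<and>
      (\<forall>j<c. (\<Sum>l<c. matmul r (mtrans W) W j l * v l) = ev * v j)}"
  have "\<exists>j<c. v j \<noteq> 0"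
  proof (rule ccontr)
    assume "\<not> (\<exists>j<c. v j \<noteq> 0)"
    hence "(\<Sum>j<c. (v j)\<^sup>2) = 0" by simp
    thus False using v unfolding Kset_def by simp
  qed
  hence "mu \<in> E" unfolding E_def mu_def using eigen[OF v mx] by blast
  hence muE: "mu \<le> Max E" using eig_finite unfolding E_def by (intro Max_ge) auto
  have mu0: "mu \<ge> 0" unfolding mu_def QQ_def by (simp add: sum_nonneg)
  have sig: "(sigma_max r c W)\<^sup>2 = Max E"
    unfolding sigma_max_def E_def[symmetric] using muE mu0 by simp
  define y where "y = (\<lambda>j. \<Sum>l<r. x l * W l j)"
  define Y where "Y = (\<Sum>j<c. (y j)\<^sup>2)"
  define X where "X = (\<Sum>l<r. (x l)\<^sup>2)"
  have X0: "X \<ge> 0" unfolding X_def by (simp add: sum_nonneg)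
  have Y0: "Y \<ge> 0" unfolding Y_def by (simp add: sum_nonneg)
  have "Y = (\<Sum>j<c. y j * (\<Sum>l<r. x l * W l j))"
    unfolding Y_def y_def by (simp add: power2_eq_square)
  also have "\<dots> = (\<Sum>j<c. \<Sum>l<r. x l * (W l j * y j))"
    by (simp add: sum_distrib_left mult_ac)
  also have "\<dots> = (\<Sum>l<r. \<Sum>j<c. x l * (W l j * y j))"
    by (rule sum.swap)
  also have "\<dots> = (\<Sum>l<r. x l * Mv c W y l)"
    unfolding Mv_def by (simp add: sum_distrib_left)
  finally have Yeq: "Y = (\<Sum>l<r. x l * Mv c W y l)" .
  have "Y\<^sup>2 \<le> X * QQ r c W y"
    unfolding Yeq X_def QQ_def by (rule Cauchy_Schwarz_ineq_sum)
  also have "QQ r c W y \<le> mu * Y"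
    using QQ_bound[OF v mx] unfolding mu_def Y_def by blast
  finally have "Y\<^sup>2 \<le> X * (mu * Y)" using X0 by (simp add: mult_left_mono)
  hence "Y \<le> mu * X"
  proof (cases "Y = 0")
    case False
    hence "Y > 0" using Y0 by simp
    moreover assume "Y\<^sup>2 \<le> X * (mu * Y)"
    ultimately show ?thesis by (simp add: power2_eq_square mult_ac)
  qed (use mu0 X0 in simp)
  also have "mu * X \<le> Max E * X" using muE X0 by (simp add: mult_right_mono)
  finally show ?thesis unfolding sig Y_def X_def y_def .
qed

lemma sigma_nonneg:
  assumes c: "c > 0"
  shows "sigma_max r c W \<ge> 0"
proof -
  obtain v where v: "v \<in> Kset c" and mx: "\<forall>u\<in>Kset c. QQ r c W u \<le> QQ r c W v"
    using max_exists[OF c] by blast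
  define mu where "mu = QQ r c W v"
  define E where "E = {ev. \<exists>v::nat\<Rightarrow>real. (\<exists>j<c. v j \<noteq> 0) \<and>
      (\<forall>j<c. (\<Sum>l<c. matmul r (mtrans W) W j l * v l) = ev * v j)}"
  have "\<exists>j<c. v j \<noteq> 0"
  proof (rule ccontr)
    assume "\<not> (\<exists>j<c. v j \<noteq> 0)"
    hence "(\<Sum>j<c. (v j)\<^sup>2) = 0" by simp
    thus False using v unfolding Kset_def by simp
  qed
  hence "mu \<in> E" unfolding E_def mu_def using eigen[OF v mx] by blast
  hence muE: "mu \<le> Max E" using eig_finite unfolding E_def by (intro Max_ge) auto
  have mu0: "mu \<ge> 0" unfolding mu_def QQ_def by (simp add: sum_nonneg)
  show ?thesis unfolding sigma_max_def E_def[symmetric] using muE mu0 by simp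
qed



lemma vnorm_L2: "vnorm n f = L2_set f {..<n}"
  unfolding vnorm_def L2_set_def by simp

lemma vnorm_sum:
  fixes K :: nat
  shows "vnorm n (\<lambda>b. \<Sum>l<K. f l b) \<le> (\<Sum>l<K. vnorm n (f l))"
proof (induction K)
  case 0
  then show ?case by (simp add: vnorm_def)
next
  case (Suc K)
  have "vnorm n (\<lambda>b. \<Sum>l<Suc K. f l b) = vnorm n (\<lambda>b. (\<Sum>l<K. f l b) + f K b)" by simp
  also have "\<dots> \<le> vnorm n (\<lambda>b. \<Sum>l<K. f l b) + vnorm n (f K)"
    unfolding vnorm_L2 by (rule L2_set_triangle_ineq)
  also have "\<dots> \<le> (\<Sum>l<K. vnorm n (f l)) + vnorm n (f K)" using Suc by simp
  finally show ?case by simp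
qed

lemma vnorm_scale: "0 \<le> c \<Longrightarrow> vnorm n (\<lambda>b. c * f b) = c * vnorm n f"
  unfolding vnorm_L2 by (simp add: L2_set_right_distrib)

lemma vnorm_nonneg: "vnorm n f \<ge> 0" unfolding vnorm_def by (simp add: sum_nonneg)


lemma row_bound:
  assumes "c > 0"
  shows "vnorm c (matmul r X W a) \<le> sigma_max r c W * rownorm r X a"
proof -
  have "(vnorm c (matmul r X W a))\<^sup>2 = (\<Sum>j<c. (\<Sum>l<r. X a l * W l j)\<^sup>2)"
    unfolding vnorm_def matmul_def by (simp add: sum_nonneg)
  also have "\<dots> \<le> (sigma_max r c W)\<^sup>2 * (\<Sum>l<r. (X a l)\<^sup>2)" by (rule sigma_bound[OF assms])
  also have "\<dots> = (sigma_max r c W * rownorm r X a)\<^sup>2"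
    unfolding rownorm_def by (simp add: power_mult_distrib sum_nonneg)
  finally show ?thesis
    by (rule power2_le_imp_le) (use sigma_nonneg[OF assms] in \<open>simp add: rownorm_def sum_nonneg\<close>)
qed

lemma ip_bound: "\<bar>\<Sum>s<n. f s * g s\<bar> \<le> vnorm n f * vnorm n g"
proof -
  have "\<bar>\<Sum>s<n. f s * g s\<bar> \<le> (\<Sum>s<n. \<bar>f s\<bar> * \<bar>g s\<bar>)"
    by (rule order_trans[OF sum_abs]) (simp add: abs_mult)
  also have "\<dots> \<le> vnorm n f * vnorm n g" unfolding vnorm_L2 by (rule L2_set_mult_ineq)
  finally show ?thesis .
qed

lemma proj_bound:
  fixes Y Ys :: rmat and z :: "nat \<Rightarrow> real"
  assumes g: "g > 0" and w: "\<forall>b<n. Y i b = (cc * Ys i b - z b) / g"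
  shows "vnorm n (proj_perp_row n Y Ys i) \<le> vnorm n z / g"
proof -
  define yy where "yy = (\<Sum>j<n. (Ys i j)\<^sup>2)"
  define vy where "vy = (\<Sum>j<n. Y i j * Ys i j)"
  define zy where "zy = (\<Sum>j<n. z j * Ys i j)"
  define Z where "Z = (\<Sum>j<n. (z j)\<^sup>2)"
  have P: "proj_perp_row n Y Ys i = (\<lambda>c. if yy = 0 then Y i c else Y i c - (vy / yy) * Ys i c)"
    unfolding proj_perp_row_def yy_def vy_def Let_def by simp
  show ?thesis
  proof (cases "yy = 0")
    case True
    hence ys0: "\<forall>b<n. Ys i b = 0" unfolding yy_def by (simp add: sum_nonneg_eq_0_iff)
    have "vnorm n (proj_perp_row n Y Ys i) = vnorm n (\<lambda>b. (1/g) * z b)"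
      unfolding P vnorm_def using True w ys0 by (intro arg_cong[where f=sqrt] sum.cong) (auto simp: power2_eq_square)
    also have "\<dots> = vnorm n z / g" using g by (subst vnorm_scale) auto
    finally show ?thesis by simp
  next
    case False
    have yy0: "yy > 0" using False unfolding yy_def
      by (metis (no_types, lifting) less_eq_real_def sum_nonneg zero_le_power2)
    define kk where "kk = zy / yy"
    have vy: "vy = (cc * yy - zy) / g"
    proof -
      have "vy = (\<Sum>j<n. (cc * (Ys i j)\<^sup>2 - z j * Ys i j) / g)"
        unfolding vy_def using w by (intro sum.cong) (auto simp: power2_eq_square algebra_simps)
      also have "\<dots> = (cc * yy - zy) / g"
        unfolding yy_def zy_def
        by (simp add: sum_divide_distrib[symmetric] sum_subtractf sum_distrib_left)
      finally show ?thesis .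
    qed
    have pb: "\<forall>b<n. proj_perp_row n Y Ys i b = (kk * Ys i b - z b) / g"
    proof (intro allI impI)
      fix b assume b: "b < n"
      show "proj_perp_row n Y Ys i b = (kk * Ys i b - z b) / g"
      proof -
        have Yb: "Y i b = (cc * Ys i b - z b) / g" using w b by simp
        have "proj_perp_row n Y Ys i b = Y i b - (vy / yy) * Ys i b" using False P by simp
        also have "\<dots> = (cc * Ys i b - z b) / g - ((cc * yy - zy) / g / yy) * Ys i b"
          unfolding Yb vy ..
        also have "\<dots> = (kk * Ys i b - z b) / g" unfolding kk_def using yy0 g
          by (simp add: field_simps)
        finally show ?thesis .
      qed
    qed
    have "(vnorm n (proj_perp_row n Y Ys i))\<^sup>2 = (\<Sum>b<n. ((kk * Ys i b - z b) / g)\<^sup>2)"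
      unfolding vnorm_def using pb by (simp add: sum_nonneg)
    also have "\<dots> = (kk\<^sup>2 * yy - 2 * kk * zy + Z) / g\<^sup>2"
      unfolding yy_def zy_def Z_def
      by (simp add: power_divide sum_divide_distrib[symmetric] power2_eq_square algebra_simps
            sum.distrib sum_subtractf sum_distrib_left)
    also have "kk\<^sup>2 * yy - 2 * kk * zy + Z = Z - zy\<^sup>2 / yy"
      unfolding kk_def using yy0 by (simp add: field_simps power2_eq_square)
    also have "(Z - zy\<^sup>2 / yy) / g\<^sup>2 \<le> Z / g\<^sup>2"
      using yy0 g by (simp add: divide_right_mono)
    also have "Z / g\<^sup>2 = (vnorm n z / g)\<^sup>2"
      unfolding Z_def vnorm_def by (simp add: power_divide sum_nonneg)
    finally show ?thesis
      by (rule power2_le_imp_le) (use vnorm_nonneg[of n z] g in simp)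
  qed
qed



lemma mm_vc: "matmul n (vconcat k U X0) W r = (if r < k then matmul n U W r else matmul n X0 W (r - k))"
  by (auto simp: matmul_def vconcat_def fun_eq_iff)

lemma scores_eq: "attn_scores din dkey Wq Wkey X a b
   = (\<Sum>s<dkey. matmul din X Wq a s * matmul din X Wkey b s) / sqrt (real dkey)"
  by (simp only: attn_scores_def matmul_def[of dkey] mtrans_def)

lemma sum_split:
  fixes m :: nat
  shows "(\<Sum>l<k+m. f l) = (\<Sum>l<k. f l) + (\<Sum>j<m. f (k + j))"
  by (induction m) (simp_all add: add.assoc)

theorem theorem1:
  fixes din dout dkey k m :: nat
    and Wq Wkey Wv X0 Ystar U :: rmat
    and Mu :: real and i :: nat
  assumes "din > 0" "dout > 0" "dkey > 0" "k > 0" "m > 0"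
    and "Mu > 0"
    and "i < m"
    and "vnorm dout (proj_perp_row dout (self_attention m din dkey Wq Wkey Wv X0) Ystar i)
         > real k *
           (exp (sigma_max din dkey Wq * sigma_max din dkey Wkey * Mu
                   * Max {rownorm din X0 j | j. j < m} / sqrt (real dkey))
            / (\<Sum>j<m. exp (attn_scores din dkey Wq Wkey X0 i j))
            * sigma_max din dout Wv * Mu)"
    and "\<forall>j<k. rownorm din U j \<le> Mu"
  shows "\<exists>a<m. \<exists>b<dout.
           self_attention (k + m) din dkey Wq Wkey Wv (vconcat k U X0) (k + a) b \<noteq> Ystar a b"
proof (rule ccontr)
  assume "\<not> ?thesis"
  hence eq: "\<forall>b<dout. self_attention (k + m) din dkey Wq Wkey Wv (vconcat k U X0) (k + i) b = Ystar i b"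
    using assms(7) by blast
  note dkey = assms(3) and dout = assms(2) and Mu = assms(6) and hyp = assms(8) and Ub = assms(9)
  define Xc where "Xc = vconcat k U X0"
  define Mx where "Mx = Max {rownorm din X0 j | j. j < m}"
  define sq where "sq = sigma_max din dkey Wq"
  define sk where "sk = sigma_max din dkey Wkey"
  define sv where "sv = sigma_max din dout Wv"
  define alpha where "alpha = sq * sk * Mu * Mx / sqrt (real dkey)"
  define e where "e = (\<lambda>l. exp (attn_scores din dkey Wq Wkey Xc (k + i) l))"
  define V where "V = matmul din Xc Wv"
  define g where "g = (\<Sum>j<m. exp (attn_scores din dkey Wq Wkey X0 i j))"
  define S where "S = (\<Sum>l<k. e l)"
  define A where "A = (\<lambda>b. \<Sum>l<k. e l * V l b)"
  define Ymax where "Ymax = self_attention m din dkey Wq Wkey Wv X0"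
  have g0: "g > 0" unfolding g_def using assms(5) by (intro sum_pos) auto
  have S0: "S \<ge> 0" unfolding S_def e_def by (simp add: sum_nonneg)
  have sq0: "sq \<ge> 0" "sk \<ge> 0" "sv \<ge> 0" unfolding sq_def sk_def sv_def
    using sigma_nonneg dkey dout by auto
  have Mxset: "{rownorm din X0 j | j. j < m} = (\<lambda>j. rownorm din X0 j) ` {..<m}" by auto
  have Mxi: "rownorm din X0 i \<le> Mx" unfolding Mx_def Mxset using assms(7) by (intro Max_ge) auto
  have rn0: "\<And>X j. rownorm din X j \<ge> 0" unfolding rownorm_def by (simp add: sum_nonneg)
  have scX: "\<And>j. attn_scores din dkey Wq Wkey Xc (k + i) (k + j) = attn_scores din dkey Wq Wkey X0 i j"
    unfolding scores_eq Xc_def mm_vc by simp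
  have eb: "e l \<le> exp alpha" if l: "l < k" for l
  proof -
    have "\<bar>\<Sum>s<dkey. matmul din Xc Wq (k + i) s * matmul din Xc Wkey l s\<bar>
        \<le> vnorm dkey (matmul din Xc Wq (k + i)) * vnorm dkey (matmul din Xc Wkey l)"
      by (rule ip_bound)
    also have "matmul din Xc Wq (k + i) = matmul din X0 Wq i" unfolding Xc_def mm_vc by simp
    also have "matmul din Xc Wkey l = matmul din U Wkey l" unfolding Xc_def mm_vc using l by simp
    also have "vnorm dkey (matmul din X0 Wq i) * vnorm dkey (matmul din U Wkey l)
        \<le> (sq * Mx) * (sk * Mu)"
    proof (rule mult_mono)
      show "vnorm dkey (matmul din X0 Wq i) \<le> sq * Mx"
        using row_bound[OF dkey, of din X0 Wq i] Mxi sq0 unfolding sq_def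
        by (meson mult_left_mono order_trans)
      show "vnorm dkey (matmul din U Wkey l) \<le> sk * Mu"
        using row_bound[OF dkey, of din U Wkey l] Ub l sq0 unfolding sk_def
        by (meson mult_left_mono order_trans)
      show "0 \<le> sq * Mx" using sq0 Mxi rn0[of X0 i] by simp
      show "0 \<le> vnorm dkey (matmul din U Wkey l)" by (rule vnorm_nonneg)
    qed
    finally have "\<bar>\<Sum>s<dkey. matmul din X0 Wq i s * matmul din U Wkey l s\<bar> \<le> sq * Mx * (sk * Mu)" .
    moreover have "matmul din Xc Wq (k + i) = matmul din X0 Wq i" unfolding Xc_def mm_vc by simp
    moreover have "matmul din Xc Wkey l = matmul din U Wkey l" unfolding Xc_def mm_vc using l by simp
    ultimately have "\<bar>\<Sum>s<dkey. matmul din Xc Wq (k + i) s * matmul din Xc Wkey l s\<bar> \<le> sq * Mx * (sk * Mu)" by simp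
    hence "attn_scores din dkey Wq Wkey Xc (k + i) l \<le> alpha"
      unfolding scores_eq alpha_def using dkey
      by (simp add: divide_right_mono mult_ac abs_le_iff)
    thus ?thesis unfolding e_def by simp
  qed
  have Vb: "vnorm dout (V l) \<le> sv * Mu" if l: "l < k" for l
  proof -
    have "V l = matmul din U Wv l" unfolding V_def Xc_def mm_vc using l by simp
    thus ?thesis using row_bound[OF dout, of din U Wv l] Ub l sq0 unfolding sv_def
      by (metis mult_left_mono order_trans)
  qed
  have Yrow: "Ystar i b = (A b + g * Ymax i b) / (S + g)" if b: "b < dout" for b
  proof -
    have "Ystar i b = (\<Sum>l<k+m. e l * V l b) / (\<Sum>l<k+m. e l)"
      using eq b unfolding self_attention_def e_def V_def Xc_def by simp
    also have "(\<Sum>l<k+m. e l) = S + g"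
      unfolding sum_split S_def g_def e_def scX ..
    also have "(\<Sum>l<k+m. e l * V l b) = A b + (\<Sum>j<m. exp (attn_scores din dkey Wq Wkey X0 i j) * matmul din X0 Wv j b)"
      unfolding sum_split A_def e_def V_def by (simp add: scX[unfolded Xc_def] mm_vc Xc_def)
    also have "(\<Sum>j<m. exp (attn_scores din dkey Wq Wkey X0 i j) * matmul din X0 Wv j b) = g * Ymax i b"
      unfolding Ymax_def self_attention_def g_def[symmetric] using g0 by simp
    finally show ?thesis .
  qed
  have w: "\<forall>b<dout. Ymax i b = ((S + g) * Ystar i b - A b) / g"
  proof (intro allI impI)
    fix b assume "b < dout"
    from Yrow[OF this] have "Ystar i b * (S + g) = A b + g * Ymax i b" using S0 g0 by (simp add: field_simps)
    thus "Ymax i b = ((S + g) * Ystar i b - A b) / g" using g0 by (simp add: field_simps)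
  qed
  have P: "vnorm dout (proj_perp_row dout Ymax Ystar i) \<le> vnorm dout A / g"
    by (rule proj_bound[where Y=Ymax and i=i and cc="S + g" and z=A and Ys=Ystar and g=g and n=dout, OF g0 w])
  have "vnorm dout A \<le> (\<Sum>l<k. vnorm dout (\<lambda>b. e l * V l b))"
    unfolding A_def by (rule vnorm_sum)
  also have "\<dots> = (\<Sum>l<k. e l * vnorm dout (V l))"
    unfolding e_def by (simp add: vnorm_scale)
  also have "\<dots> \<le> (\<Sum>l<k. exp alpha * (sv * Mu))"
  proof (rule sum_mono)
    fix l assume "l \<in> {..<k}"
    hence l: "l < k" by simp
    show "e l * vnorm dout (V l) \<le> exp alpha * (sv * Mu)"
      by (rule mult_mono[OF eb[OF l] Vb[OF l]]) (auto simp: vnorm_nonneg)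
  qed
  also have "\<dots> = real k * exp alpha * sv * Mu" by simp
  finally have "vnorm dout A / g \<le> real k * exp alpha * sv * Mu / g"
    using g0 by (simp add: divide_right_mono)
  with P have "vnorm dout (proj_perp_row dout Ymax Ystar i) \<le> real k * (exp alpha / g * sv * Mu)"
    by simp
  thus False using hyp unfolding Ymax_def alpha_def sq_def sk_def sv_def Mx_def g_def by simp
qed

end
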